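(* Let $\mathbb{F}=\mathbb{F}_{q^m}$, let $k\ge 1$, and let $(x_1,y_1),\dots,(x_r,y_r)\in\mathbb{F}\times\mathbb{F}$ be linearly independent over $\mathbb{F}_q$. Run the following procedure. Initialize $f_0(x,y)=x$, $f_1(x,y)=y$. For $i=1,\dots,r$: set $\Delta_0=f_0(x_i,y_i)$, $\Delta_1=f_1(x_i,y_i)$; if $\Delta_0=0$, replace $f_1$ by $f_1^q-\Delta_1^{q-1}f_1$; else if $\Delta_1=0$, replace $f_0$ by $f_0^q-\Delta_0^{q-1}f_0$; else, if $\deg_{1,k-1}(f_0)\le\deg_{1,k-1}(f_1)$, simultaneously replace $f_1$ by $\Delta_1 f_0-\Delta_0 f_1$ and $f_0$ by $f_0^q-\Delta_0^{q-1}f_0$; otherwise simultaneously replace $f_0$ by $\Delta_1 f_0-\Delta_0 f_1$ and $f_1$ by $f_1^q-\Delta_1^{q-1}f_1$ (in each simultaneous update, the right-hand sides use the values of $f_0,f_1$ before the update). Then the final polynomials $f_0$ and $f_1$ are, respectively, $x$-minimal and $y$-minimal with respect to the set $\{(x_i,y_i)\}_{i=1}^r$.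
   Context: A bivariate linearized polynomial over $\mathbb{F}$ is $f(x,y)=f_x(x)+f_y(y)$ with $f_x(x)=\sum_i a_i x^{q^i}$, $f_y(y)=\sum_j b_j y^{q^j}$, $a_i,b_j\in\mathbb{F}$; its monomials are $x^{[i]}=x^{q^i}$ and $y^{[j]}=y^{q^j}$. $f^q$ denotes $(f(x,y))^q$, again a bivariate linearized polynomial. If $f_x\not\equiv0$ has degree $q^{d_x(f)}$ and $f_y\not\equiv0$ has degree $q^{d_y(f)}$, the $(1,k-1)$-weighted degree is $\deg_{1,k-1}(f)=\max\{d_x(f),k-1+d_y(f)\}$ (omitting a term whose part is identically zero). Monomials are totally ordered by weight, where $x^{[i]}$ has weight $i$ and $y^{[j]}$ has weight $k-1+j$, with ties broken by declaring $x^{[i]}$ smaller than $y^{[j]}$ when their weights are equal. The leading term $\mathrm{lt}(f)$ of a nonzero $f$ is its largest monomial (with nonzero coefficient) in this order. A nonzero bivariate linearized polynomial $f$ is $x$-minimal with respect to a finite set of points $P\subset\mathbb{F}\times\mathbb{F}$ if $f$ vanishes at all points of $P$, $\mathrm{lt}(f)$ is of the form $x^{[d]}$, and no nonzero bivariate linearized polynomial $g$ vanishing on $P$ with $\mathrm{lt}(g)$ of the form $x^{[e]}$ has $\mathrm{lt}(g)$ strictly smaller than $\mathrm{lt}(f)$. $y$-minimal is defined identically with leading terms of the form $y^{[j]}$. *)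

theory Defs
  imports "HOL-Computational_Algebra.Computational_Algebra"
begin

text \<open>A linearized polynomial sum a_i X^(q^i) is represented by the ordinary
polynomial whose i-th coefficient is a_i.  A bivariate linearized polynomial
f_x(x) + f_y(y) is represented by the pair (f_x, f_y).\<close>

type_synonym 'a blin = "'a poly \<times> 'a poly"

definition eval_lin :: "nat \<Rightarrow> 'a::field poly \<Rightarrow> 'a \<Rightarrow> 'a" where
  "eval_lin q p a = (\<Sum>i\<le>degree p. coeff p i * a ^ (q ^ i))"

definition eval_blin :: "nat \<Rightarrow> 'a::field blin \<Rightarrow> 'a \<times> 'a \<Rightarrow> 'a" where
  "eval_blin q f P = eval_lin q (fst f) (fst P) + eval_lin q (snd f) (snd P)"

text \<open>q-th power of a linearized polynomial: coefficient a_i of X^[i]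
becomes a_i^q at X^[i+1].\<close>
definition frob_lin :: "nat \<Rightarrow> 'a::field poly \<Rightarrow> 'a poly" where
  "frob_lin q p = pCons 0 (map_poly (\<lambda>a. a ^ q) p)"

definition frob_blin :: "nat \<Rightarrow> 'a::field blin \<Rightarrow> 'a blin" where
  "frob_blin q f = (frob_lin q (fst f), frob_lin q (snd f))"

definition scale_blin :: "'a::field \<Rightarrow> 'a blin \<Rightarrow> 'a blin" where
  "scale_blin c f = (smult c (fst f), smult c (snd f))"

definition sub_blin :: "'a::field blin \<Rightarrow> 'a blin \<Rightarrow> 'a blin" where
  "sub_blin f g = (fst f - fst g, snd f - snd g)"

definition zero_blin :: "'a::field blin" where
  "zero_blin = (0, 0)"

text \<open>(1,k-1)-weighted degree, omitting a part that is identically zero.\<close>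
definition degw :: "nat \<Rightarrow> 'a::field blin \<Rightarrow> nat" where
  "degw k f = max (if fst f = 0 then 0 else degree (fst f))
                  (if snd f = 0 then 0 else k - 1 + degree (snd f))"

datatype monomial = MX nat | MY nat

text \<open>Monomial order: by weight, ties broken with x-monomials smaller.
Encoded injectively as 2*weight + tag.\<close>
fun mkey :: "nat \<Rightarrow> monomial \<Rightarrow> nat" where
  "mkey k (MX i) = 2 * i"
| "mkey k (MY j) = 2 * (k - 1 + j) + 1"

definition msupp :: "'a::field blin \<Rightarrow> monomial set" where
  "msupp f = {MX i | i. coeff (fst f) i \<noteq> 0} \<union> {MY j | j. coeff (snd f) j \<noteq> 0}"

definition lt :: "nat \<Rightarrow> 'a::field blin \<Rightarrow> monomial" where
  "lt k f = (THE m. m \<in> msupp f \<and> (\<forall>m'\<in>msupp f. mkey k m' \<le> mkey k m))"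

definition vanishes_on :: "nat \<Rightarrow> 'a::field blin \<Rightarrow> ('a \<times> 'a) set \<Rightarrow> bool" where
  "vanishes_on q f P \<longleftrightarrow> (\<forall>p\<in>P. eval_blin q f p = 0)"

definition x_minimal :: "nat \<Rightarrow> nat \<Rightarrow> ('a::field \<times> 'a) set \<Rightarrow> 'a blin \<Rightarrow> bool" where
  "x_minimal q k P f \<longleftrightarrow> f \<noteq> zero_blin \<and> vanishes_on q f P \<and> (\<exists>d. lt k f = MX d) \<and>
     (\<forall>g. g \<noteq> zero_blin \<and> vanishes_on q g P \<and> (\<exists>e. lt k g = MX e)
          \<longrightarrow> \<not> mkey k (lt k g) < mkey k (lt k f))"

definition y_minimal :: "nat \<Rightarrow> nat \<Rightarrow> ('a::field \<times> 'a) set \<Rightarrow> 'a blin \<Rightarrow> bool" where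
  "y_minimal q k P f \<longleftrightarrow> f \<noteq> zero_blin \<and> vanishes_on q f P \<and> (\<exists>d. lt k f = MY d) \<and>
     (\<forall>g. g \<noteq> zero_blin \<and> vanishes_on q g P \<and> (\<exists>e. lt k g = MY e)
          \<longrightarrow> \<not> mkey k (lt k g) < mkey k (lt k f))"

text \<open>F_q = fixed points of a \<mapsto> a^q; linear independence of a list of points over F_q
(a list with a repeated entry is dependent).\<close>
definition lin_indep_Fq :: "nat \<Rightarrow> ('a::field \<times> 'a) list \<Rightarrow> bool" where
  "lin_indep_Fq q pts \<longleftrightarrow>
     (\<forall>c :: nat \<Rightarrow> 'a. (\<forall>i<length pts. c i ^ q = c i) \<and>
        (\<Sum>i<length pts. c i * fst (pts ! i)) = 0 \<and>
        (\<Sum>i<length pts. c i * snd (pts ! i)) = 0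
        \<longrightarrow> (\<forall>i<length pts. c i = 0))"

definition alg_step :: "nat \<Rightarrow> nat \<Rightarrow> 'a::field blin \<times> 'a blin \<Rightarrow> 'a \<times> 'a \<Rightarrow> 'a blin \<times> 'a blin" where
  "alg_step q k fs P =
    (let f0 = fst fs; f1 = snd fs; d0 = eval_blin q f0 P; d1 = eval_blin q f1 P in
     if d0 = 0 then (f0, sub_blin (frob_blin q f1) (scale_blin (d1 ^ (q - 1)) f1))
     else if d1 = 0 then (sub_blin (frob_blin q f0) (scale_blin (d0 ^ (q - 1)) f0), f1)
     else if degw k f0 \<le> degw k f1 then
       (sub_blin (frob_blin q f0) (scale_blin (d0 ^ (q - 1)) f0),
        sub_blin (scale_blin d1 f0) (scale_blin d0 f1))
     else
       (sub_blin (scale_blin d1 f0) (scale_blin d0 f1),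
        sub_blin (frob_blin q f1) (scale_blin (d1 ^ (q - 1)) f1)))"

definition run_alg :: "nat \<Rightarrow> nat \<Rightarrow> ('a::field \<times> 'a) list \<Rightarrow> 'a blin \<times> 'a blin" where
  "run_alg q k pts = fold (\<lambda>P fs. alg_step q k fs P) pts (([:1:], 0), (0, [:1:]))"

end

theory Submission
  imports Defs
begin

lemma card_zero_field: "of_nat (card (UNIV :: 'a::{finite,field} set)) = (0::'a)"
proof -
  have "(\<Sum>x\<in>UNIV. x + 1) = (\<Sum>x\<in>(UNIV::'a set). x)"
    by (rule sum.reindex_bij_witness[of _ "\<lambda>x. x - 1" "\<lambda>x. x + 1"]) auto
  thus ?thesis by (simp add: sum.distrib)
qed

lemma frob_add_from_assms:
  fixes q m :: nat
  assumes "\<exists>p n. prime p \<and> n > 0 \<and> q = p ^ n"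
    and "m \<ge> 1"
    and "card (UNIV :: 'a::{finite,field} set) = q ^ m"
  shows "(x + y :: 'a) ^ q = x ^ q + y ^ q"
proof -
  obtain p n where p: "prime p" "n > 0" "q = p ^ n" using assms(1) by blast
  have cp: "CHAR('a) > 0" by (rule finite_imp_CHAR_pos) simp
  have pc: "prime CHAR('a)" using prime_CHAR_semidom[OF cp] .
  have "CHAR('a) dvd card (UNIV :: 'a set)"
    using card_zero_field[where 'a='a] of_nat_eq_0_iff_char_dvd[where 'a='a] by blast
  hence "CHAR('a) dvd p ^ (n * m)" using assms(3) p(3) by (simp add: power_mult)
  hence "CHAR('a) dvd p" using pc prime_dvd_power by blast
  hence "CHAR('a) = p" using pc p(1) primes_dvd_imp_eq by blast
  thus ?thesis using freshmans_dream'[OF pc, of q n] p(3) by simp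
qed


lemma eval_lin_bound:
  assumes "degree p \<le> N"
  shows "eval_lin q p (a::'a::field) = (\<Sum>i\<le>N. coeff p i * a ^ (q ^ i))"
  unfolding eval_lin_def
  by (rule sum.mono_neutral_left) (use assms in \<open>auto simp: coeff_eq_0\<close>)

lemma eval_lin_diff: "eval_lin q (p - r) (a::'a::field) = eval_lin q p a - eval_lin q r a"
proof -
  let ?N = "max (degree p) (degree r)"
  have "eval_lin q (p - r) a = (\<Sum>i\<le>?N. coeff (p - r) i * a ^ (q ^ i))"
    by (rule eval_lin_bound) (meson degree_diff_le_max)
  also have "\<dots> = (\<Sum>i\<le>?N. coeff p i * a ^ (q ^ i)) - (\<Sum>i\<le>?N. coeff r i * a ^ (q ^ i))"
    by (simp add: algebra_simps sum_subtractf)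
  also have "\<dots> = eval_lin q p a - eval_lin q r a"
    using eval_lin_bound[where p=p and N="?N" and a=a and q=q] eval_lin_bound[where p=r and N="?N" and a=a and q=q] by simp
  finally show ?thesis .
qed

lemma eval_lin_smult: "eval_lin q (smult c p) (a::'a::field) = c * eval_lin q p a"
proof -
  have "eval_lin q (smult c p) a = (\<Sum>i\<le>degree p. coeff (smult c p) i * a ^ (q ^ i))"
    by (rule eval_lin_bound) (simp)
  also have "\<dots> = c * eval_lin q p a"
    by (simp add: eval_lin_def sum_distrib_left mult.assoc)
  finally show ?thesis .
qed

lemma eval_lin_zero: "eval_lin q 0 (a::'a::field) = 0"
  by (simp add: eval_lin_def)

lemma eval_lin_one: "eval_lin q [:1:] (a::'a::field) = a"
  by (simp add: eval_lin_def)

context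
  fixes q :: nat
  assumes q0: "q > 0"
    and fa: "\<And>x y :: 'a::field. (x + y) ^ q = x ^ q + y ^ q"
begin

lemma fminus: "((x::'a) - y) ^ q = x ^ q - y ^ q"
  using fa[of "x - y" y] by (simp add: algebra_simps)

lemma fpow_minus: "((x::'a) - y) ^ (q ^ j) = x ^ (q ^ j) - y ^ (q ^ j)"
proof (induction j)
  case (Suc j)
  have "(x - y) ^ (q ^ Suc j) = ((x - y) ^ (q ^ j)) ^ q"
    by (simp only: power_Suc2 power_mult)
  also have "\<dots> = (x ^ (q ^ j)) ^ q - (y ^ (q ^ j)) ^ q" using Suc fminus by simp
  finally show ?case by (simp only: power_Suc2 power_mult)
qed simp

lemma fsum: "(sum (f :: _ \<Rightarrow> 'a) A) ^ q = sum (\<lambda>i. f i ^ q) A"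
  by (induction A rule: infinite_finite_induct) (auto simp: fa q0)

lemma fixed_pow: "(c::'a) ^ q = c \<Longrightarrow> c ^ (q ^ j) = c"
proof (induction j)
  case (Suc j)
  then show ?case by (simp add: power_mult mult.commute)
qed simp

lemma coeff_frob_lin: "coeff (frob_lin q p) i = (if i = 0 then 0 else (coeff p (i - 1) :: 'a) ^ q)"
  using q0 by (cases i) (auto simp: frob_lin_def coeff_map_poly)

lemma eval_lin_frob: "eval_lin q (frob_lin q p) (a::'a) = (eval_lin q p a) ^ q"
proof -
  have dg: "degree (frob_lin q p) \<le> Suc (degree p)"
  proof -
    have "degree (map_poly (\<lambda>a::'a. a ^ q) p) = degree p" by (rule degree_map_poly) simp
    thus ?thesis unfolding frob_lin_def using degree_pCons_le[of 0 "map_poly (\<lambda>a::'a. a ^ q) p"] by simp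
  qed
  have "eval_lin q (frob_lin q p) a = (\<Sum>i\<le>Suc (degree p). coeff (frob_lin q p) i * a ^ (q ^ i))"
    by (rule eval_lin_bound[OF dg])
  also have "\<dots> = (\<Sum>i\<le>degree p. coeff (frob_lin q p) (Suc i) * a ^ (q ^ Suc i))"
    by (subst sum.atMost_Suc_shift) (simp add: coeff_frob_lin)
  also have "\<dots> = (\<Sum>i\<le>degree p. (coeff p i * a ^ (q ^ i)) ^ q)"
  proof (rule sum.cong[OF refl])
    fix i
    have "a ^ (q ^ Suc i) = (a ^ (q ^ i)) ^ q" by (simp only: power_Suc2 power_mult)
    thus "coeff (frob_lin q p) (Suc i) * a ^ q ^ Suc i = (coeff p i * a ^ q ^ i) ^ q"
      by (simp add: coeff_frob_lin power_mult_distrib)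
  qed
  also have "\<dots> = (eval_lin q p a) ^ q"
    by (simp add: eval_lin_def fsum)
  finally show ?thesis .
qed

lemma eval_lin_pt:
  assumes c: "c ^ q = c"
  shows "eval_lin q p ((a::'a) - c * b) = eval_lin q p a - c * eval_lin q p b"
proof -
  have t: "(a - c * b) ^ (q ^ i) = a ^ (q ^ i) - c * b ^ (q ^ i)" for i
    by (simp only: fpow_minus power_mult_distrib fixed_pow[OF c])
  show ?thesis
    unfolding eval_lin_def t by (simp add: right_diff_distrib sum_subtractf sum_distrib_left mult.left_commute)
qed

end


fun mc :: "'a::field blin \<Rightarrow> monomial \<Rightarrow> 'a" where
  "mc f (MX i) = coeff (fst f) i"
| "mc f (MY j) = coeff (snd f) j"

fun msh :: "monomial \<Rightarrow> monomial" where
  "msh (MX i) = MX (Suc i)"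
| "msh (MY j) = MY (Suc j)"

lemma msupp_mem: "x \<in> msupp f \<longleftrightarrow> mc f x \<noteq> 0"
  by (cases x) (auto simp: msupp_def)

lemma msupp_eq: "msupp f = {m. mc f m \<noteq> 0}"
  using msupp_mem by blast

lemma nz_iff: "f \<noteq> zero_blin \<longleftrightarrow> (\<exists>m. mc f m \<noteq> 0)"
proof
  assume "f \<noteq> zero_blin"
  then have "fst f \<noteq> 0 \<or> snd f \<noteq> 0" by (cases f) (auto simp: zero_blin_def)
  then show "\<exists>m. mc f m \<noteq> 0"
    by (metis leading_coeff_neq_0 mc.simps)
next
  assume "\<exists>m. mc f m \<noteq> 0"
  then obtain m where "mc f m \<noteq> 0" by blast
  then show "f \<noteq> zero_blin"
    by (cases m) (auto simp: zero_blin_def)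
qed

lemma finite_msupp: "finite (msupp f)"
proof -
  have "msupp f \<subseteq> MX ` {..degree (fst f)} \<union> MY ` {..degree (snd f)}"
    unfolding msupp_def by (auto intro: le_degree)
  thus ?thesis by (rule finite_subset) auto
qed

lemma mkey_inj: "mkey k m = mkey k m' \<Longrightarrow> m = m'"
  by (cases m; cases m'; simp; presburger)

lemma mkey_msh: "mkey k (msh m) = mkey k m + 2"
  by (cases m) auto

lemma lt_prop:
  assumes "f \<noteq> zero_blin"
  shows "mc f (lt k f) \<noteq> 0 \<and> (\<forall>m. mc f m \<noteq> 0 \<longrightarrow> mkey k m \<le> mkey k (lt k f))"
proof -
  have ne: "msupp f \<noteq> {}" using assms nz_iff[of f] by (auto simp: msupp_eq)
  let ?M = "Max (mkey k ` msupp f)"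
  have "?M \<in> mkey k ` msupp f" using ne finite_msupp[of f] by (intro Max_in) auto
  then obtain m where m: "m \<in> msupp f" "mkey k m = ?M" by auto
  have mx: "\<forall>m'\<in>msupp f. mkey k m' \<le> mkey k m" using m finite_msupp[of f] by (auto intro: Max_ge)
  have "lt k f = m"
    unfolding lt_def
  proof (rule the_equality)
    show "m \<in> msupp f \<and> (\<forall>m'\<in>msupp f. mkey k m' \<le> mkey k m)" using m mx by auto
  next
    fix m' assume "m' \<in> msupp f \<and> (\<forall>m''\<in>msupp f. mkey k m'' \<le> mkey k m')"
    then have "mkey k m' = mkey k m" using m mx by (meson antisym)
    then show "m' = m" by (rule mkey_inj)
  qed
  then show ?thesis using m mx by (auto simp: msupp_eq)
qed

lemma lt_eqI:
  assumes "mc f m \<noteq> 0" "\<And>m'. mc f m' \<noteq> 0 \<Longrightarrow> mkey k m' \<le> mkey k m"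
  shows "lt k f = m"
proof -
  have "f \<noteq> zero_blin" using assms(1) nz_iff by blast
  from lt_prop[OF this, of k] assms have "mkey k (lt k f) = mkey k m"
    by (meson antisym)
  thus ?thesis by (rule mkey_inj)
qed

lemma mc_sub [simp]: "mc (sub_blin f g) m = mc f m - mc g m"
  by (cases m) (auto simp: sub_blin_def)

lemma mc_scale [simp]: "mc (scale_blin c f) m = c * mc f m"
  by (cases m) (auto simp: scale_blin_def)

lemma eval_zero_blin: "eval_blin q zero_blin P = (0::'a::field)"
  by (simp add: eval_blin_def zero_blin_def eval_lin_def)

lemma eval_sub: "eval_blin q (sub_blin f g) (P::'a::field \<times> 'a) = eval_blin q f P - eval_blin q g P"
  by (simp add: eval_blin_def sub_blin_def eval_lin_diff)

lemma eval_scale: "eval_blin q (scale_blin c f) (P::'a::field \<times> 'a) = c * eval_blin q f P"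
  by (simp add: eval_blin_def scale_blin_def eval_lin_smult algebra_simps)

context
  fixes q :: nat
  assumes q0: "q > 0"
    and fa: "\<And>x y :: 'a::field. (x + y) ^ q = x ^ q + y ^ q"
begin

lemma eval_frob: "eval_blin q (frob_blin q f) (P::'a \<times> 'a) = (eval_blin q f P) ^ q"
  by (simp add: eval_blin_def frob_blin_def eval_lin_frob[OF q0 fa] fa)

lemma eval_pt:
  assumes "c ^ q = c"
  shows "eval_blin q f (fst P - c * fst p, snd P - c * snd p) = eval_blin q f P - c * eval_blin q f (p::'a \<times> 'a)"
  by (simp add: eval_blin_def eval_lin_pt[OF q0 fa assms] algebra_simps)

lemma mc_frob_sh: "mc (frob_blin q f) (msh m) = (mc f m :: 'a) ^ q"
  by (cases m) (auto simp: frob_blin_def coeff_frob_lin[OF q0 fa])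

lemma mc_frob_nz: "mc (frob_blin q f) m \<noteq> (0::'a) \<Longrightarrow> \<exists>m'. m = msh m' \<and> mc f m' \<noteq> 0"
proof (cases m)
  case (MX i)
  assume h: "mc (frob_blin q f) m \<noteq> 0"
  then have "i \<noteq> 0" using MX by (auto simp: frob_blin_def coeff_frob_lin[OF q0 fa] split: if_splits)
  then have "m = msh (MX (i - 1))" using MX by simp
  then show ?thesis using h mc_frob_sh by (metis q0 zero_power)
next
  case (MY i)
  assume h: "mc (frob_blin q f) m \<noteq> 0"
  then have "i \<noteq> 0" using MY by (auto simp: frob_blin_def coeff_frob_lin[OF q0 fa] split: if_splits)
  then have "m = msh (MY (i - 1))" using MY by simp
  then show ?thesis using h mc_frob_sh by (metis q0 zero_power)
qed

end


lemma nz_of_mc: "mc f m \<noteq> 0 \<Longrightarrow> f \<noteq> zero_blin"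
  using nz_iff by blast

lemma msh_pow_MX: "(msh ^^ j) (MX a) = MX (a + j)"
  by (induction j) auto

lemma msh_pow_MY: "(msh ^^ j) (MY a) = MY (a + j)"
  by (induction j) auto

lemma lt_cancel:
  assumes "f \<noteq> zero_blin" "g \<noteq> zero_blin" "lt k f = m" "lt k g = m"
    and h: "h = sub_blin f (scale_blin (mc f m / mc g m) g)" "h \<noteq> zero_blin"
  shows "mkey k (lt k h) < mkey k m"
proof -
  have pf: "mc f m \<noteq> 0" "\<forall>m'. mc f m' \<noteq> 0 \<longrightarrow> mkey k m' \<le> mkey k m"
    using lt_prop[OF assms(1), of k] assms(3) by auto
  have pg: "mc g m \<noteq> 0" "\<forall>m'. mc g m' \<noteq> 0 \<longrightarrow> mkey k m' \<le> mkey k m"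
    using lt_prop[OF assms(2), of k] assms(4) by auto
  have ph: "mc h (lt k h) \<noteq> 0" using lt_prop[OF h(2)] by blast
  have "mc h m = 0" using pg(1) h(1) by simp
  hence ne: "lt k h \<noteq> m" using ph by auto
  have "mc f (lt k h) \<noteq> 0 \<or> mc g (lt k h) \<noteq> 0" using ph h(1) by auto
  hence "mkey k (lt k h) \<le> mkey k m" using pf pg by auto
  moreover have "mkey k (lt k h) \<noteq> mkey k m" using ne mkey_inj by blast
  ultimately show ?thesis by simp
qed

lemma lt_comb1:
  assumes "f0 \<noteq> zero_blin" "f1 \<noteq> zero_blin" "mkey k (lt k f0) < mkey k (lt k f1)" "d0 \<noteq> 0"
  shows "sub_blin (scale_blin d1 f0) (scale_blin d0 f1) \<noteq> zero_blin \<and>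
         lt k (sub_blin (scale_blin d1 f0) (scale_blin d0 f1)) = lt k f1"
proof -
  let ?g = "sub_blin (scale_blin d1 f0) (scale_blin d0 f1)"
  have p0: "\<forall>m'. mc f0 m' \<noteq> 0 \<longrightarrow> mkey k m' \<le> mkey k (lt k f0)"
    using lt_prop[OF assms(1), of k] by auto
  have p1: "mc f1 (lt k f1) \<noteq> 0" "\<forall>m'. mc f1 m' \<noteq> 0 \<longrightarrow> mkey k m' \<le> mkey k (lt k f1)"
    using lt_prop[OF assms(2), of k] by auto
  have z: "mc f0 (lt k f1) = 0" using p0 assms(3) by fastforce
  have a: "mc ?g (lt k f1) \<noteq> 0" using z p1(1) assms(4) by simp
  have "lt k ?g = lt k f1"
  proof (rule lt_eqI[OF a])
    fix m' assume "mc ?g m' \<noteq> 0"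
    hence "mc f0 m' \<noteq> 0 \<or> mc f1 m' \<noteq> 0" by auto
    thus "mkey k m' \<le> mkey k (lt k f1)" using p0 p1 assms(3) by fastforce
  qed
  thus ?thesis using nz_of_mc[OF a] by blast
qed

lemma lt_comb2:
  assumes "f0 \<noteq> zero_blin" "f1 \<noteq> zero_blin" "mkey k (lt k f1) < mkey k (lt k f0)" "d1 \<noteq> 0"
  shows "sub_blin (scale_blin d1 f0) (scale_blin d0 f1) \<noteq> zero_blin \<and>
         lt k (sub_blin (scale_blin d1 f0) (scale_blin d0 f1)) = lt k f0"
proof -
  let ?g = "sub_blin (scale_blin d1 f0) (scale_blin d0 f1)"
  have p1: "\<forall>m'. mc f1 m' \<noteq> 0 \<longrightarrow> mkey k m' \<le> mkey k (lt k f1)"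
    using lt_prop[OF assms(2), of k] by auto
  have p0: "mc f0 (lt k f0) \<noteq> 0" "\<forall>m'. mc f0 m' \<noteq> 0 \<longrightarrow> mkey k m' \<le> mkey k (lt k f0)"
    using lt_prop[OF assms(1), of k] by auto
  have z: "mc f1 (lt k f0) = 0" using p1 assms(3) by fastforce
  have a: "mc ?g (lt k f0) \<noteq> 0" using z p0(1) assms(4) by simp
  have "lt k ?g = lt k f0"
  proof (rule lt_eqI[OF a])
    fix m' assume "mc ?g m' \<noteq> 0"
    hence "mc f0 m' \<noteq> 0 \<or> mc f1 m' \<noteq> 0" by auto
    thus "mkey k m' \<le> mkey k (lt k f0)" using p0 p1 assms(3) by fastforce
  qed
  thus ?thesis using nz_of_mc[OF a] by blast
qed

lemma degw_MX:
  assumes "f \<noteq> zero_blin" "lt k f = MX a"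
  shows "degw k f = a"
proof -
  have p: "mc f (MX a) \<noteq> 0" "\<forall>m'. mc f m' \<noteq> 0 \<longrightarrow> mkey k m' \<le> 2 * a"
    using lt_prop[OF assms(1), of k] assms(2) by auto
  have c: "coeff (fst f) a \<noteq> 0" using p(1) by simp
  hence f0: "fst f \<noteq> 0" by auto
  have "coeff (fst f) (degree (fst f)) \<noteq> 0" using f0 by simp
  hence "2 * degree (fst f) \<le> 2 * a" using p(2)[rule_format, of "MX (degree (fst f))"] by simp
  moreover have "a \<le> degree (fst f)" using c le_degree by blast
  ultimately have d: "degree (fst f) = a" by simp
  have "k - 1 + degree (snd f) < a" if "snd f \<noteq> 0"
  proof -
    have "coeff (snd f) (degree (snd f)) \<noteq> 0" using that by simp
    thus ?thesis using p(2)[rule_format, of "MY (degree (snd f))"] by simp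
  qed
  thus ?thesis unfolding degw_def using d f0 by auto
qed

lemma degw_MY:
  assumes "f \<noteq> zero_blin" "lt k f = MY b"
  shows "degw k f = k - 1 + b"
proof -
  have p: "mc f (MY b) \<noteq> 0" "\<forall>m'. mc f m' \<noteq> 0 \<longrightarrow> mkey k m' \<le> 2 * (k - 1 + b) + 1"
    using lt_prop[OF assms(1), of k] assms(2) by auto
  have c: "coeff (snd f) b \<noteq> 0" using p(1) by simp
  hence f0: "snd f \<noteq> 0" by auto
  have "coeff (snd f) (degree (snd f)) \<noteq> 0" using f0 by simp
  hence "degree (snd f) \<le> b" using p(2)[rule_format, of "MY (degree (snd f))"] by simp
  moreover have "b \<le> degree (snd f)" using c le_degree by blast
  ultimately have d: "degree (snd f) = b" by simp
  have "degree (fst f) \<le> k - 1 + b" if "fst f \<noteq> 0"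
  proof -
    have "coeff (fst f) (degree (fst f)) \<noteq> 0" using that by simp
    thus ?thesis using p(2)[rule_format, of "MX (degree (fst f))"] by simp
  qed
  thus ?thesis unfolding degw_def using d f0 by auto
qed

context
  fixes q :: nat
  assumes q0: "q > 0"
    and fa: "\<And>x y :: 'a::field. (x + y) ^ q = x ^ q + y ^ q"
begin

lemma lt_frobsub:
  assumes "(f :: 'a blin) \<noteq> zero_blin"
  shows "sub_blin (frob_blin q f) (scale_blin e f) \<noteq> zero_blin \<and>
         lt k (sub_blin (frob_blin q f) (scale_blin e f)) = msh (lt k f)"
proof -
  let ?g = "sub_blin (frob_blin q f) (scale_blin e f)"
  let ?m = "lt k f"
  have p: "mc f ?m \<noteq> 0" "\<forall>m'. mc f m' \<noteq> 0 \<longrightarrow> mkey k m' \<le> mkey k ?m"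
    using lt_prop[OF assms, of k] by auto
  have z: "mc f (msh ?m) = 0" using p(2) mkey_msh[of k ?m] by fastforce
  have a: "mc ?g (msh ?m) \<noteq> 0" using z p(1) by (simp add: mc_frob_sh[OF q0 fa])
  have "lt k ?g = msh ?m"
  proof (rule lt_eqI[OF a])
    fix m' assume "mc ?g m' \<noteq> 0"
    hence "mc (frob_blin q f) m' \<noteq> 0 \<or> mc f m' \<noteq> 0" by auto
    thus "mkey k m' \<le> mkey k (msh ?m)"
    proof
      assume "mc (frob_blin q f) m' \<noteq> 0"
      then obtain m'' where "m' = msh m''" "mc f m'' \<noteq> 0" using mc_frob_nz[OF q0 fa] by blast
      thus ?thesis using p(2) by (simp add: mkey_msh)
    qed (use p(2) mkey_msh in fastforce)
  qed
  thus ?thesis using nz_of_mc[OF a] by blast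
qed

lemma lt_frob:
  assumes "(f :: 'a blin) \<noteq> zero_blin"
  shows "frob_blin q f \<noteq> zero_blin \<and> lt k (frob_blin q f) = msh (lt k f)"
proof -
  have "sub_blin (frob_blin q f) (scale_blin 0 f) = frob_blin q f"
    by (simp add: sub_blin_def scale_blin_def)
  thus ?thesis using lt_frobsub[OF assms, of 0 k] by simp
qed

lemma lt_frobpow:
  assumes "(f :: 'a blin) \<noteq> zero_blin"
  shows "(frob_blin q ^^ j) f \<noteq> zero_blin \<and> lt k ((frob_blin q ^^ j) f) = (msh ^^ j) (lt k f)"
proof (induction j)
  case (Suc j)
  then show ?case using lt_frob[of "(frob_blin q ^^ j) f" k] by simp
qed (simp add: assms)

lemma eval_frobpow: "eval_blin q (f :: 'a blin) P = 0 \<Longrightarrow> eval_blin q ((frob_blin q ^^ j) f) P = 0"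
  by (induction j) (auto simp: eval_frob[OF q0 fa] q0)

lemma vanish_frobpow: "vanishes_on q (f :: 'a blin) S \<Longrightarrow> vanishes_on q ((frob_blin q ^^ j) f) S"
  by (simp add: vanishes_on_def eval_frobpow)

end


definition span_pts :: "nat \<Rightarrow> ('a::field \<times> 'a) list \<Rightarrow> ('a \<times> 'a) set" where
  "span_pts q L = {P. \<exists>c. (\<forall>i<length L. c i ^ q = c i) \<and>
     P = (\<Sum>i<length L. c i * fst (L ! i), \<Sum>i<length L. c i * snd (L ! i))}"

lemma span_nil: "(0, 0) \<in> span_pts q []"
  by (auto simp: span_pts_def)

lemma span_snoc:
  assumes "c ^ q = (c::'a::field)" "(fst P - c * fst p, snd P - c * snd p) \<in> span_pts q xs"
  shows "P \<in> span_pts q (xs @ [p])"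
proof -
  obtain d where d: "\<forall>i<length xs. d i ^ q = d i"
    "(fst P - c * fst p, snd P - c * snd p) =
       (\<Sum>i<length xs. d i * fst (xs ! i), \<Sum>i<length xs. d i * snd (xs ! i))"
    using assms(2) unfolding span_pts_def by blast
  define d' where "d' i = (if i < length xs then d i else c)" for i
  have s: "(\<Sum>i<length (xs @ [p]). d' i * g ((xs @ [p]) ! i)) = (\<Sum>i<length xs. d i * g (xs ! i)) + c * g p"
    for g :: "'a \<times> 'a \<Rightarrow> 'a"
    by (simp add: d'_def nth_append)
  have "\<forall>i<length (xs @ [p]). d' i ^ q = d' i" using d(1) assms(1) by (simp add: d'_def)
  moreover have "P = (\<Sum>i<length (xs @ [p]). d' i * fst ((xs @ [p]) ! i),
                      \<Sum>i<length (xs @ [p]). d' i * snd ((xs @ [p]) ! i))"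
  proof -
    have e1: "fst P = (\<Sum>i<length xs. d i * fst (xs ! i)) + c * fst p"
      using arg_cong[OF d(2), of fst] by (simp add: algebra_simps)
    have e2: "snd P = (\<Sum>i<length xs. d i * snd (xs ! i)) + c * snd p"
      using arg_cong[OF d(2), of snd] by (simp add: algebra_simps)
    show ?thesis unfolding s[of fst] s[of snd] by (rule prod_eqI) (simp_all only: e1 e2 fst_conv snd_conv)
  qed
  ultimately show ?thesis unfolding span_pts_def by blast
qed

lemma notin_span:
  assumes "lin_indep_Fq q (xs @ [p])" "(-1 :: 'a::field) ^ q = -1"
  shows "p \<notin> span_pts q (xs :: ('a \<times> 'a) list)"
proof
  assume "p \<in> span_pts q xs"
  then obtain d where d: "\<forall>i<length xs. d i ^ q = d i"
    "p = (\<Sum>i<length xs. d i * fst (xs ! i), \<Sum>i<length xs. d i * snd (xs ! i))"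
    unfolding span_pts_def by blast
  define d' where "d' i = (if i < length xs then d i else -1)" for i
  have s: "(\<Sum>i<length (xs @ [p]). d' i * g ((xs @ [p]) ! i)) = (\<Sum>i<length xs. d i * g (xs ! i)) - g p"
    for g :: "'a \<times> 'a \<Rightarrow> 'a"
    by (simp add: d'_def nth_append)
  have "\<forall>i<length (xs @ [p]). d' i ^ q = d' i" using d(1) assms(2) by (simp add: d'_def)
  moreover have "(\<Sum>i<length (xs @ [p]). d' i * fst ((xs @ [p]) ! i)) = 0"
    "(\<Sum>i<length (xs @ [p]). d' i * snd ((xs @ [p]) ! i)) = 0"
    unfolding s[of fst] s[of snd] using d(2) by simp_all
  ultimately have "\<forall>i<length (xs @ [p]). d' i = 0"
    using assms(1) unfolding lin_indep_Fq_def by blast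
  hence "d' (length xs) = 0" by simp
  thus False by (simp add: d'_def)
qed

lemma indep_prefix:
  assumes "q > 0" "lin_indep_Fq q (xs @ [p])"
  shows "lin_indep_Fq q (xs :: ('a::field \<times> 'a) list)"
  unfolding lin_indep_Fq_def
proof (intro allI impI)
  fix c :: "nat \<Rightarrow> 'a" and i
  assume h: "(\<forall>i<length xs. c i ^ q = c i) \<and> (\<Sum>i<length xs. c i * fst (xs ! i)) = 0 \<and>
       (\<Sum>i<length xs. c i * snd (xs ! i)) = 0" and i: "i < length xs"
  define d' where "d' j = (if j < length xs then c j else 0)" for j
  have s: "(\<Sum>j<length (xs @ [p]). d' j * g ((xs @ [p]) ! j)) = (\<Sum>j<length xs. c j * g (xs ! j))"
    for g :: "'a \<times> 'a \<Rightarrow> 'a"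
    by (simp add: d'_def nth_append)
  have "\<forall>j<length (xs @ [p]). d' j ^ q = d' j" using h assms(1) by (simp add: d'_def)
  moreover have "(\<Sum>j<length (xs @ [p]). d' j * fst ((xs @ [p]) ! j)) = 0"
    "(\<Sum>j<length (xs @ [p]). d' j * snd ((xs @ [p]) ! j)) = 0"
    using h s[of fst] s[of snd] by simp_all
  ultimately have "\<forall>j<length (xs @ [p]). d' j = 0"
    using assms(2) unfolding lin_indep_Fq_def by blast
  hence "d' i = 0" using i by simp
  thus "c i = 0" using i by (simp add: d'_def)
qed

lemma vanishes_insert: "vanishes_on q f (insert p S) \<longleftrightarrow> eval_blin q f p = 0 \<and> vanishes_on q f S"
  by (simp add: vanishes_on_def)

lemma vanishes_comb:
  "vanishes_on q f S \<Longrightarrow> vanishes_on q g S \<Longrightarrow>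
   vanishes_on q (sub_blin (scale_blin c f) (scale_blin (d::'a::field) g)) S"
  by (simp add: vanishes_on_def eval_sub eval_scale)

lemma vanishes_sub:
  "vanishes_on q f S \<Longrightarrow> vanishes_on q g S \<Longrightarrow>
   vanishes_on q (sub_blin f (scale_blin (d::'a::field) g)) S"
  by (simp add: vanishes_on_def eval_sub eval_scale)

lemma nz_of_eval: "eval_blin q f p \<noteq> 0 \<Longrightarrow> f \<noteq> (zero_blin :: 'a::field blin)"
  using eval_zero_blin by metis

lemma xmin_keep:
  "x_minimal q k S f \<Longrightarrow> eval_blin q f p = 0 \<Longrightarrow> x_minimal q k (insert p S) f"
  unfolding x_minimal_def by (simp add: vanishes_insert)

lemma ymin_keep:
  "y_minimal q k S f \<Longrightarrow> eval_blin q f p = 0 \<Longrightarrow> y_minimal q k (insert p S) f"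
  unfolding y_minimal_def by (simp add: vanishes_insert)


definition inv_st :: "nat \<Rightarrow> nat \<Rightarrow> ('a::field \<times> 'a) list \<Rightarrow> 'a blin \<times> 'a blin \<Rightarrow> bool" where
  "inv_st q k xs fs \<longleftrightarrow> x_minimal q k (set xs) (fst fs) \<and> y_minimal q k (set xs) (snd fs) \<and>
     (\<forall>P. eval_blin q (fst fs) P = 0 \<and> eval_blin q (snd fs) P = 0 \<longrightarrow> P \<in> span_pts q xs)"

lemma xmin_same:
  assumes "x_minimal q k S f" "g \<noteq> zero_blin" "lt k g = lt k f" "vanishes_on q g (insert p S)"
  shows "x_minimal q k (insert p S) g"
  using assms unfolding x_minimal_def vanishes_insert by auto

lemma ymin_same:
  assumes "y_minimal q k S f" "g \<noteq> zero_blin" "lt k g = lt k f" "vanishes_on q g (insert p S)"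
  shows "y_minimal q k (insert p S) g"
  using assms unfolding y_minimal_def vanishes_insert by auto

context
  fixes q :: nat
  assumes q0: "q > 0"
    and fa: "\<And>x y :: 'a::field. (x + y) ^ q = x ^ q + y ^ q"
begin

lemma eval_frobsub:
  "eval_blin q (sub_blin (frob_blin q f) (scale_blin e f)) (P :: 'a \<times> 'a) = (eval_blin q f P) ^ q - e * eval_blin q f P"
  by (simp add: eval_sub eval_scale eval_frob[OF q0 fa])

lemma pow_pred: "(d::'a) ^ (q - 1) * d = d ^ q"
  using q0 by (metis Suc_diff_1 power_Suc2)

lemma pow_pred': "(d::'a) ^ (q - Suc 0) * d = d ^ q"
  using pow_pred by simp

lemma root_lemma:
  assumes "(d::'a) \<noteq> 0" "t ^ q - d ^ (q - 1) * t = 0"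
  shows "\<exists>c. c ^ q = c \<and> t = c * d"
proof (intro exI conjI)
  have "t ^ q = d ^ (q - 1) * t" using assms(2) by simp
  hence "(t / d) ^ q = d ^ (q - 1) * t / d ^ q" by (simp add: power_divide)
  also have "\<dots> = d ^ (q - 1) * t / (d ^ (q - 1) * d)" by (simp only: pow_pred)
  also have "\<dots> = t / d" using assms(1) by simp
  finally show "(t / d) ^ q = t / d" .
  show "t = t / d * d" using assms(1) by simp
qed

lemma zeros_step:
  assumes Z: "\<forall>P. eval_blin q f0 P = 0 \<and> eval_blin q f1 P = 0 \<longrightarrow> P \<in> span_pts q xs"
    and c: "c ^ q = c" and e0: "eval_blin q f0 P = c * eval_blin q f0 (p :: 'a \<times> 'a)"
    and e1: "eval_blin q f1 P = c * eval_blin q f1 p"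
  shows "P \<in> span_pts q (xs @ [p])"
proof (rule span_snoc[OF c])
  show "(fst P - c * fst p, snd P - c * snd p) \<in> span_pts q xs"
    using Z eval_pt[OF q0 fa c, of f0 P p] eval_pt[OF q0 fa c, of f1 P p] e0 e1 by simp
qed

lemma red0:
  assumes xm: "x_minimal q k S f0" and lf0: "lt k f0 = MX a"
    and ym: "y_minimal q k S f1" and lf1: "lt k f1 = MY b"
    and e0: "eval_blin q f0 p = (0::'a)"
  shows "vanishes_on q h S \<Longrightarrow> eval_blin q h p \<noteq> 0 \<Longrightarrow> mkey k (MY b) \<le> mkey k (lt k h)"
proof (induction "mkey k (lt k h)" arbitrary: h rule: less_induct)
  case less
  have hnz: "h \<noteq> zero_blin" using less.prems(2) nz_of_eval by blast
  show ?case
  proof (cases "lt k h")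
    case (MY e)
    have "\<not> mkey k (lt k h) < mkey k (lt k f1)"
      using ym hnz less.prems(1) MY unfolding y_minimal_def by blast
    thus ?thesis using lf1 by simp
  next
    case (MX e)
    have "\<not> mkey k (lt k h) < mkey k (lt k f0)"
      using xm hnz less.prems(1) MX unfolding x_minimal_def by blast
    hence ae: "a \<le> e" using lf0 MX by simp
    define g where "g = (frob_blin q ^^ (e - a)) f0"
    have f0nz: "f0 \<noteq> zero_blin" using xm unfolding x_minimal_def by blast
    have g: "g \<noteq> zero_blin" "lt k g = MX e"
      using lt_frobpow[OF q0 fa f0nz, of "e - a" k] lf0 ae by (simp_all add: g_def msh_pow_MX)
    define h1 where "h1 = sub_blin h (scale_blin (mc h (MX e) / mc g (MX e)) g)"
    have gv: "vanishes_on q g S"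
      using xm vanish_frobpow[OF q0 fa] unfolding g_def x_minimal_def by blast
    have gp: "eval_blin q g p = 0" using eval_frobpow[OF q0 fa e0] g_def by simp
    have h1v: "vanishes_on q h1 S" using vanishes_sub[OF less.prems(1) gv] h1_def by simp
    have h1p: "eval_blin q h1 p \<noteq> 0" using less.prems(2) gp by (simp add: h1_def eval_sub eval_scale)
    have "mkey k (lt k h1) < mkey k (MX e)"
      by (rule lt_cancel[OF hnz g(1) MX g(2) h1_def nz_of_eval[OF h1p]])
    hence lt1: "mkey k (lt k h1) < mkey k (lt k h)" using MX by simp
    from less.hyps[OF lt1 h1v h1p] lt1 show ?thesis by simp
  qed
qed

lemma red1:
  assumes xm: "x_minimal q k S f0" and lf0: "lt k f0 = MX a"
    and ym: "y_minimal q k S f1" and lf1: "lt k f1 = MY b"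
    and e1: "eval_blin q f1 p = (0::'a)"
  shows "vanishes_on q h S \<Longrightarrow> eval_blin q h p \<noteq> 0 \<Longrightarrow> mkey k (MX a) \<le> mkey k (lt k h)"
proof (induction "mkey k (lt k h)" arbitrary: h rule: less_induct)
  case less
  have hnz: "h \<noteq> zero_blin" using less.prems(2) nz_of_eval by blast
  show ?case
  proof (cases "lt k h")
    case (MX e)
    have "\<not> mkey k (lt k h) < mkey k (lt k f0)"
      using xm hnz less.prems(1) MX unfolding x_minimal_def by blast
    thus ?thesis using lf0 by simp
  next
    case (MY e)
    have "\<not> mkey k (lt k h) < mkey k (lt k f1)"
      using ym hnz less.prems(1) MY unfolding y_minimal_def by blast
    hence ae: "b \<le> e" using lf1 MY by simp
    define g where "g = (frob_blin q ^^ (e - b)) f1"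
    have f1nz: "f1 \<noteq> zero_blin" using ym unfolding y_minimal_def by blast
    have g: "g \<noteq> zero_blin" "lt k g = MY e"
      using lt_frobpow[OF q0 fa f1nz, of "e - b" k] lf1 ae by (simp_all add: g_def msh_pow_MY)
    define h1 where "h1 = sub_blin h (scale_blin (mc h (MY e) / mc g (MY e)) g)"
    have gv: "vanishes_on q g S"
      using ym vanish_frobpow[OF q0 fa] unfolding g_def y_minimal_def by blast
    have gp: "eval_blin q g p = 0" using eval_frobpow[OF q0 fa e1] g_def by simp
    have h1v: "vanishes_on q h1 S" using vanishes_sub[OF less.prems(1) gv] h1_def by simp
    have h1p: "eval_blin q h1 p \<noteq> 0" using less.prems(2) gp by (simp add: h1_def eval_sub eval_scale)
    have "mkey k (lt k h1) < mkey k (MY e)"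
      by (rule lt_cancel[OF hnz g(1) MY g(2) h1_def nz_of_eval[OF h1p]])
    hence lt1: "mkey k (lt k h1) < mkey k (lt k h)" using MY by simp
    from less.hyps[OF lt1 h1v h1p] lt1 show ?thesis by simp
  qed
qed

lemma frobsub_vanish:
  assumes "vanishes_on q f S" "eval_blin q f p = (d::'a)"
  shows "vanishes_on q (sub_blin (frob_blin q f) (scale_blin (d ^ (q - 1)) f)) (insert p S)"
  using assms q0 by (simp add: vanishes_on_def eval_frobsub pow_pred')

lemma xmin_new:
  assumes xm: "x_minimal q k S f0" and lf0: "lt k f0 = MX a"
    and d0: "eval_blin q f0 p = (d0::'a)" "d0 \<noteq> 0"
    and H: "\<And>h. h \<noteq> zero_blin \<Longrightarrow> vanishes_on q h S \<Longrightarrow> eval_blin q h p \<noteq> 0 \<Longrightarrow>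
              mkey k (lt k h) < mkey k (MX a) \<Longrightarrow> False"
  shows "x_minimal q k (insert p S) (sub_blin (frob_blin q f0) (scale_blin (d0 ^ (q - 1)) f0))"
proof -
  let ?f = "sub_blin (frob_blin q f0) (scale_blin (d0 ^ (q - 1)) f0)"
  have f0nz: "f0 \<noteq> zero_blin" and v0: "vanishes_on q f0 S" using xm unfolding x_minimal_def by blast+
  have lf: "?f \<noteq> zero_blin" "lt k ?f = MX (Suc a)" using lt_frobsub[OF q0 fa f0nz, of "d0 ^ (q - 1)" k] lf0 by simp_all
  have vf: "vanishes_on q ?f (insert p S)" by (rule frobsub_vanish[OF v0 d0(1)])
  have "\<not> mkey k (lt k g) < mkey k (lt k ?f)"
    if g: "g \<noteq> zero_blin" "vanishes_on q g (insert p S)" "lt k g = MX e" for g e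
  proof
    assume lt: "mkey k (lt k g) < mkey k (lt k ?f)"
    have gS: "vanishes_on q g S" and gp: "eval_blin q g p = 0" using g(2) vanishes_insert by blast+
    have "\<not> mkey k (lt k g) < mkey k (lt k f0)" using xm g(1) gS g(3) unfolding x_minimal_def by blast
    hence ea: "e = a" using lt lf(2) lf0 g(3) by simp
    define h where "h = sub_blin g (scale_blin (mc g (MX a) / mc f0 (MX a)) f0)"
    have c1: "mc g (MX a) \<noteq> 0" using lt_prop[OF g(1), of k] g(3) ea by simp
    have c2: "mc f0 (MX a) \<noteq> 0" using lt_prop[OF f0nz, of k] lf0 by simp
    have hp: "eval_blin q h p \<noteq> 0" using gp d0 c1 c2 by (simp add: h_def eval_sub eval_scale)
    have hv: "vanishes_on q h S" using vanishes_sub[OF gS v0] h_def by simp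
    have "mkey k (lt k h) < mkey k (MX a)"
      by (rule lt_cancel[OF g(1) f0nz _ lf0 h_def nz_of_eval[OF hp]]) (use g(3) ea in simp)
    thus False using H[OF nz_of_eval[OF hp] hv hp] by blast
  qed
  thus ?thesis unfolding x_minimal_def using lf vf by blast
qed

lemma ymin_new:
  assumes ym: "y_minimal q k S f1" and lf1: "lt k f1 = MY b"
    and d1: "eval_blin q f1 p = (d1::'a)" "d1 \<noteq> 0"
    and H: "\<And>h. h \<noteq> zero_blin \<Longrightarrow> vanishes_on q h S \<Longrightarrow> eval_blin q h p \<noteq> 0 \<Longrightarrow>
              mkey k (lt k h) < mkey k (MY b) \<Longrightarrow> False"
  shows "y_minimal q k (insert p S) (sub_blin (frob_blin q f1) (scale_blin (d1 ^ (q - 1)) f1))"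
proof -
  let ?f = "sub_blin (frob_blin q f1) (scale_blin (d1 ^ (q - 1)) f1)"
  have f1nz: "f1 \<noteq> zero_blin" and v1: "vanishes_on q f1 S" using ym unfolding y_minimal_def by blast+
  have lf: "?f \<noteq> zero_blin" "lt k ?f = MY (Suc b)" using lt_frobsub[OF q0 fa f1nz, of "d1 ^ (q - 1)" k] lf1 by simp_all
  have vf: "vanishes_on q ?f (insert p S)" by (rule frobsub_vanish[OF v1 d1(1)])
  have "\<not> mkey k (lt k g) < mkey k (lt k ?f)"
    if g: "g \<noteq> zero_blin" "vanishes_on q g (insert p S)" "lt k g = MY e" for g e
  proof
    assume lt: "mkey k (lt k g) < mkey k (lt k ?f)"
    have gS: "vanishes_on q g S" and gp: "eval_blin q g p = 0" using g(2) vanishes_insert by blast+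
    have "\<not> mkey k (lt k g) < mkey k (lt k f1)" using ym g(1) gS g(3) unfolding y_minimal_def by blast
    hence ea: "e = b" using lt lf(2) lf1 g(3) by simp
    define h where "h = sub_blin g (scale_blin (mc g (MY b) / mc f1 (MY b)) f1)"
    have c1: "mc g (MY b) \<noteq> 0" using lt_prop[OF g(1), of k] g(3) ea by simp
    have c2: "mc f1 (MY b) \<noteq> 0" using lt_prop[OF f1nz, of k] lf1 by simp
    have hp: "eval_blin q h p \<noteq> 0" using gp d1 c1 c2 by (simp add: h_def eval_sub eval_scale)
    have hv: "vanishes_on q h S" using vanishes_sub[OF gS v1] h_def by simp
    have "mkey k (lt k h) < mkey k (MY b)"
      by (rule lt_cancel[OF g(1) f1nz _ lf1 h_def nz_of_eval[OF hp]]) (use g(3) ea in simp)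
    thus False using H[OF nz_of_eval[OF hp] hv hp] by blast
  qed
  thus ?thesis unfolding y_minimal_def using lf vf by blast
qed

end


context
  fixes q :: nat
  assumes q0: "q > 0"
    and fa: "\<And>x y :: 'a::field. (x + y) ^ q = x ^ q + y ^ q"
begin

lemma step:
  assumes I: "inv_st q k xs ((f0::'a blin), f1)" and np: "p \<notin> span_pts q xs"
  shows "inv_st q k (xs @ [p]) (alg_step q k (f0, f1) p)"
proof -
  let ?S = "set xs"
  have sx: "set (xs @ [p]) = insert p ?S" by simp
  have xm: "x_minimal q k ?S f0" and ym: "y_minimal q k ?S f1"
    and Z: "\<forall>P. eval_blin q f0 P = 0 \<and> eval_blin q f1 P = 0 \<longrightarrow> P \<in> span_pts q xs"
    using I unfolding inv_st_def by auto
  obtain a where lf0: "lt k f0 = MX a" using xm unfolding x_minimal_def by blast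
  obtain b where lf1: "lt k f1 = MY b" using ym unfolding y_minimal_def by blast
  have f0nz: "f0 \<noteq> zero_blin" and v0: "vanishes_on q f0 ?S" using xm unfolding x_minimal_def by blast+
  have f1nz: "f1 \<noteq> zero_blin" and v1: "vanishes_on q f1 ?S" using ym unfolding y_minimal_def by blast+
  define d0 where "d0 = eval_blin q f0 p"
  define d1 where "d1 = eval_blin q f1 p"
  have nb: "\<not> (d0 = 0 \<and> d1 = 0)" using Z[rule_format, of p] np unfolding d0_def d1_def by blast
  define F0 where "F0 = sub_blin (frob_blin q f0) (scale_blin (d0 ^ (q - 1)) f0)"
  define F1 where "F1 = sub_blin (frob_blin q f1) (scale_blin (d1 ^ (q - 1)) f1)"
  define C where "C = sub_blin (scale_blin d1 f0) (scale_blin d0 f1)"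
  have alg: "alg_step q k (f0, f1) p =
    (if d0 = 0 then (f0, F1) else if d1 = 0 then (F0, f1)
     else if degw k f0 \<le> degw k f1 then (F0, C) else (C, F1))"
    by (simp add: alg_step_def Let_def d0_def d1_def F0_def F1_def C_def)
  have dw: "degw k f0 \<le> degw k f1 \<longleftrightarrow> mkey k (MX a) < mkey k (MY b)"
    using degw_MX[OF f0nz lf0] degw_MY[OF f1nz lf1] by (simp; presburger)
  have eF0: "eval_blin q F0 P = (eval_blin q f0 P) ^ q - d0 ^ (q - 1) * eval_blin q f0 P" for P
    unfolding F0_def by (rule eval_frobsub[OF q0 fa])
  have eF1: "eval_blin q F1 P = (eval_blin q f1 P) ^ q - d1 ^ (q - 1) * eval_blin q f1 P" for P
    unfolding F1_def by (rule eval_frobsub[OF q0 fa])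
  have eC: "eval_blin q C P = d1 * eval_blin q f0 P - d0 * eval_blin q f1 P" for P
    unfolding C_def by (simp add: eval_sub eval_scale)
  have vC: "vanishes_on q C (insert p ?S)"
    using vanishes_comb[OF v0 v1] eC d0_def d1_def unfolding C_def vanishes_insert
    by (simp add: C_def mult.commute)
  show ?thesis
  proof (cases "d0 = 0")
    case True
    hence d1nz: "d1 \<noteq> 0" using nb by blast
    have X: "x_minimal q k (insert p ?S) f0" using xmin_keep[OF xm] True d0_def by simp
    have Y: "y_minimal q k (insert p ?S) F1" unfolding F1_def
    proof (rule ymin_new[OF q0 fa ym lf1 d1_def[symmetric] d1nz])
      fix h assume "h \<noteq> zero_blin" "vanishes_on q h ?S" "eval_blin q h p \<noteq> 0"
        "mkey k (lt k h) < mkey k (MY b)"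
      thus False using red0[OF q0 fa xm lf0 ym lf1, of p h] True d0_def by simp
    qed
    have "P \<in> span_pts q (xs @ [p])" if zz: "eval_blin q f0 P = 0" "eval_blin q F1 P = 0" for P
    proof -
      obtain c where c: "c ^ q = c" "eval_blin q f1 P = c * d1"
        using root_lemma[OF q0 fa d1nz, of "eval_blin q f1 P"] zz eF1 by auto
      show ?thesis using zeros_step[OF q0 fa Z c(1)] zz c True d0_def d1_def by simp
    qed
    thus ?thesis using X Y alg True unfolding inv_st_def sx by simp
  next
    case d0nz: False
    show ?thesis
    proof (cases "d1 = 0")
      case True
      have Y: "y_minimal q k (insert p ?S) f1" using ymin_keep[OF ym] True d1_def by simp
      have X: "x_minimal q k (insert p ?S) F0" unfolding F0_def
      proof (rule xmin_new[OF q0 fa xm lf0 d0_def[symmetric] d0nz])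
        fix h assume "h \<noteq> zero_blin" "vanishes_on q h ?S" "eval_blin q h p \<noteq> 0"
          "mkey k (lt k h) < mkey k (MX a)"
        thus False using red1[OF q0 fa xm lf0 ym lf1, of p h] True d1_def by simp
      qed
      have "P \<in> span_pts q (xs @ [p])" if zz: "eval_blin q F0 P = 0" "eval_blin q f1 P = 0" for P
      proof -
        obtain c where c: "c ^ q = c" "eval_blin q f0 P = c * d0"
          using root_lemma[OF q0 fa d0nz, of "eval_blin q f0 P"] zz eF0 by auto
        show ?thesis using zeros_step[OF q0 fa Z c(1)] zz c True d0_def d1_def by simp
      qed
      thus ?thesis using X Y alg True d0nz unfolding inv_st_def sx by simp
    next
      case d1nz: False
      show ?thesis
      proof (cases "degw k f0 \<le> degw k f1")
        case True
        hence ab: "mkey k (MX a) < mkey k (MY b)" using dw by simp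
        have X: "x_minimal q k (insert p ?S) F0" unfolding F0_def
        proof (rule xmin_new[OF q0 fa xm lf0 d0_def[symmetric] d0nz])
          fix h assume h: "h \<noteq> zero_blin" "vanishes_on q h ?S" "mkey k (lt k h) < mkey k (MX a)"
          show False
          proof (cases "lt k h")
            case (MX e)
            have "\<not> mkey k (lt k h) < mkey k (lt k f0)" using xm h(1,2) MX unfolding x_minimal_def by blast
            then show False using h(3) lf0 by simp
          next
            case (MY e)
            have "\<not> mkey k (lt k h) < mkey k (lt k f1)" using ym h(1,2) MY unfolding y_minimal_def by blast
            then show False using h(3) ab lf1 by simp
          qed
        qed
        have lC: "C \<noteq> zero_blin \<and> lt k C = lt k f1"
          unfolding C_def by (rule lt_comb1[OF f0nz f1nz _ d0nz]) (use ab lf0 lf1 in simp)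
        have Y: "y_minimal q k (insert p ?S) C" using ymin_same[OF ym _ _ vC] lC by blast
        have "P \<in> span_pts q (xs @ [p])" if zz: "eval_blin q F0 P = 0" "eval_blin q C P = 0" for P
        proof -
          obtain c where c: "c ^ q = c" "eval_blin q f0 P = c * d0"
            using root_lemma[OF q0 fa d0nz, of "eval_blin q f0 P"] zz eF0 by auto
          have "d1 * eval_blin q f0 P = d0 * eval_blin q f1 P"
            using zz(2) eC[of P] by (metis eq_iff_diff_eq_0)
          hence "d0 * eval_blin q f1 P = d0 * (c * d1)" using c(2) by (simp only: ac_simps)
          hence "eval_blin q f1 P = c * d1" using d0nz by simp
          thus ?thesis using zeros_step[OF q0 fa Z c(1)] c d0_def d1_def by simp
        qed
        thus ?thesis using X Y alg True d0nz d1nz unfolding inv_st_def sx by simp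
      next
        case False
        hence ab: "mkey k (MY b) < mkey k (MX a)" using dw by (simp; presburger)
        have Y: "y_minimal q k (insert p ?S) F1" unfolding F1_def
        proof (rule ymin_new[OF q0 fa ym lf1 d1_def[symmetric] d1nz])
          fix h assume h: "h \<noteq> zero_blin" "vanishes_on q h ?S" "mkey k (lt k h) < mkey k (MY b)"
          show False
          proof (cases "lt k h")
            case (MY e)
            have "\<not> mkey k (lt k h) < mkey k (lt k f1)" using ym h(1,2) MY unfolding y_minimal_def by blast
            then show False using h(3) lf1 by simp
          next
            case (MX e)
            have "\<not> mkey k (lt k h) < mkey k (lt k f0)" using xm h(1,2) MX unfolding x_minimal_def by blast
            then show False using h(3) ab lf0 by simp
          qed
        qed
        have lC: "C \<noteq> zero_blin \<and> lt k C = lt k f0"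
          unfolding C_def by (rule lt_comb2[OF f0nz f1nz _ d1nz]) (use ab lf0 lf1 in simp)
        have X: "x_minimal q k (insert p ?S) C" using xmin_same[OF xm _ _ vC] lC by blast
        have "P \<in> span_pts q (xs @ [p])" if zz: "eval_blin q C P = 0" "eval_blin q F1 P = 0" for P
        proof -
          obtain c where c: "c ^ q = c" "eval_blin q f1 P = c * d1"
            using root_lemma[OF q0 fa d1nz, of "eval_blin q f1 P"] zz eF1 by auto
          have "d1 * eval_blin q f0 P = d0 * eval_blin q f1 P"
            using zz(1) eC[of P] by (metis eq_iff_diff_eq_0)
          hence "d1 * eval_blin q f0 P = d1 * (c * d0)" using c(2) by (simp only: ac_simps)
          hence "eval_blin q f0 P = c * d0" using d1nz by simp
          thus ?thesis using zeros_step[OF q0 fa Z c(1)] c d0_def d1_def by simp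
        qed
        thus ?thesis using X Y alg False d0nz d1nz unfolding inv_st_def sx by simp
      qed
    qed
  qed
qed

lemma init_inv: "inv_st q k [] ((([:1:], 0), (0, [:1:])) :: 'a blin \<times> 'a blin)"
proof -
  have l0: "lt k (([:1:], 0) :: 'a blin) = MX 0"
  proof (rule lt_eqI)
    show "mc (([:1:], 0) :: 'a blin) (MX 0) \<noteq> 0" by simp
    fix m' assume "mc (([:1:], 0) :: 'a blin) m' \<noteq> 0"
    then show "mkey k m' \<le> mkey k (MX 0)" by (cases m') (auto simp: coeff_pCons split: nat.splits)
  qed
  have l1: "lt k ((0, [:1:]) :: 'a blin) = MY 0"
  proof (rule lt_eqI)
    show "mc ((0, [:1:]) :: 'a blin) (MY 0) \<noteq> 0" by simp
    fix m' assume "mc ((0, [:1:]) :: 'a blin) m' \<noteq> 0"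
    then show "mkey k m' \<le> mkey k (MY 0)" by (cases m') (auto simp: coeff_pCons split: nat.splits)
  qed
  have nz0: "(([:1:], 0) :: 'a blin) \<noteq> zero_blin" by (simp add: zero_blin_def)
  have nz1: "((0, [:1:]) :: 'a blin) \<noteq> zero_blin" by (simp add: zero_blin_def)
  have X: "x_minimal q k {} (([:1:], 0) :: 'a blin)"
    unfolding x_minimal_def using l0 nz0 by (simp add: vanishes_on_def)
  have Y: "y_minimal q k {} ((0, [:1:]) :: 'a blin)"
    unfolding y_minimal_def using l1 nz1 by (auto simp add: vanishes_on_def)
  have "P \<in> span_pts q []" if "eval_blin q (([:1:], 0) :: 'a blin) P = 0"
    "eval_blin q ((0, [:1:]) :: 'a blin) P = 0" for P
  proof -
    have "P = (0, 0)" using that by (cases P) (simp add: eval_blin_def eval_lin_one eval_lin_zero)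
    thus ?thesis using span_nil by simp
  qed
  thus ?thesis unfolding inv_st_def using X Y by simp
qed

lemma neg_one: "(-1 :: 'a) ^ q = -1"
proof -
  have "(1 + (-1 :: 'a)) ^ q = 1 ^ q + (-1) ^ q" by (rule fa)
  hence "0 = 1 + (-1 :: 'a) ^ q" using q0 by (simp add: power_0_left)
  thus ?thesis by (simp add: eq_neg_iff_add_eq_0 add.commute)
qed

lemma run_inv: "lin_indep_Fq q pts \<Longrightarrow> inv_st q k pts (run_alg q k (pts :: ('a \<times> 'a) list))"
proof (induction pts rule: rev_induct)
  case Nil
  then show ?case using init_inv by (simp add: run_alg_def)
next
  case (snoc p xs)
  have li: "lin_indep_Fq q xs" using indep_prefix[OF q0 snoc.prems] .
  have np: "p \<notin> span_pts q xs" using notin_span[OF snoc.prems neg_one] .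
  obtain f0 f1 where r: "run_alg q k xs = (f0, f1)" by (cases "run_alg q k xs")
  have "run_alg q k (xs @ [p]) = alg_step q k (f0, f1) p" using r by (simp add: run_alg_def)
  thus ?case using step[OF _ np] snoc.IH[OF li] r by simp
qed

end

theorem theorem16:
  fixes q m k :: nat and pts :: "('a::{finite,field} \<times> 'a) list"
  assumes "\<exists>p n. prime p \<and> n > 0 \<and> q = p ^ n"
    and "m \<ge> 1"
    and "card (UNIV :: 'a set) = q ^ m"
    and "k \<ge> 1"
    and "lin_indep_Fq q pts"
  shows "x_minimal q k (set pts) (fst (run_alg q k pts)) \<and>
         y_minimal q k (set pts) (snd (run_alg q k pts))"
proof -
  have q0: "q > 0" using assms(1) prime_gt_0_nat by auto
  have fa: "\<And>x y :: 'a. (x + y) ^ q = x ^ q + y ^ q"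
    using frob_add_from_assms[OF assms(1-3)] by blast
  show ?thesis using run_inv[OF q0 fa assms(5), of k] unfolding inv_st_def by blast
qed

end
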